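(* Let $\lambda=(\lambda_1,\dots,\lambda_I)$, $\mu=(\mu_1,\dots,\mu_J)$ be partitions of $n$ and $(T_t)_{t\ge0}$ the random transpositions chain on $\mathcal{T}_{\lambda,\mu}$. For $1\le i,k\le I$, $1\le j,l\le J$ and $\mathbf{x}\in\mathcal{T}_{\lambda,\mu}$: if $i\ne k$, $j\ne l$, \[ \mathbb{E}[T_1(i,j)T_1(k,l)\mid T_0=\mathbf{x}]=x_{ij}x_{kl}\left(1-\frac4n+\frac2{n^2}\right)+\frac2{n^2}\left(x_{kl}\lambda_i\mu_j+x_{ij}\lambda_k\mu_l+x_{il}x_{kj}\right); \] if $i\ne k$, $j=l$, \[ \mathbb{E}[T_1(i,j)T_1(k,j)\mid T_0=\mathbf{x}]=x_{ij}x_{kj}\left(1-\frac4n+\frac4{n^2}\right)+\frac2{n^2}\left(x_{kj}(\lambda_i\mu_j-\lambda_i)+x_{ij}(\lambda_k\mu_j-\lambda_k)\right); \] if $i=k$, $j=l$, \[ \mathbb{E}[T_1(i,j)^2\mid T_0=\mathbf{x}]=x_{ij}^2\left(1-\frac4n+\frac4{n^2}\right)+\frac2{n^2}\left(x_{ij}(2\lambda_i\mu_j-2\lambda_i-2\mu_j+n)+\lambda_i\mu_j\right). \]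
   Context: $\mathcal{T}_{\lambda,\mu}$ is the set of $I\times J$ nonnegative integer tables $\mathbf{x}=(x_{ij})$ with row sums $\lambda_i$ and column sums $\mu_j$; $T_t(i,j)$ is the $(i,j)$ entry at time $t$. The random transpositions chain: for $T'$ obtained from $T$ by subtracting $1$ at cells $(i_1,j_1),(i_2,j_2)$ and adding $1$ at $(i_1,j_2),(i_2,j_1)$ (with $i_1\ne i_2$, $j_1\ne j_2$), $P(T,T')=2T_{i_1j_1}T_{i_2j_2}/n^2$; $P(T,T)$ is the remaining mass. *)

theory Defs
  imports Complex_Main
begin

text \<open>A partition of n: a weakly decreasing list of positive parts summing to n.
  Rows/columns are indexed 0-based: lam ! i is the (i+1)-st part.\<close>
definition is_partition :: "nat \<Rightarrow> nat list \<Rightarrow> bool" where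
  "is_partition n lam \<longleftrightarrow> sum_list lam = n \<and> (\<forall>a\<in>set lam. 0 < a) \<and> sorted (rev lam)"

definition tables :: "nat list \<Rightarrow> nat list \<Rightarrow> (nat \<Rightarrow> nat \<Rightarrow> int) set" where
  "tables lam mu = {x. (\<forall>i j. 0 \<le> x i j)
      \<and> (\<forall>i j. (length lam \<le> i \<or> length mu \<le> j) \<longrightarrow> x i j = 0)
      \<and> (\<forall>i<length lam. (\<Sum>j<length mu. x i j) = int (lam ! i))
      \<and> (\<forall>j<length mu. (\<Sum>i<length lam. x i j) = int (mu ! j))}"

definition swap_move :: "(nat \<Rightarrow> nat \<Rightarrow> int) \<Rightarrow> nat \<Rightarrow> nat \<Rightarrow> nat \<Rightarrow> nat \<Rightarrow> nat \<Rightarrow> nat \<Rightarrow> int" where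
  "swap_move x i1 i2 j1 j2 = (\<lambda>i j. x i j
      - (if i = i1 \<and> j = j1 then 1 else 0) - (if i = i2 \<and> j = j2 then 1 else 0)
      + (if i = i1 \<and> j = j2 then 1 else 0) + (if i = i2 \<and> j = j1 then 1 else 0))"

text \<open>The move
  (i1,i2,j1,j2) and (i2,i1,j2,j1) are the same move, so we sum over i1 < i2 only
  (each distinct T' arises from exactly one such unordered move).\<close>
definition rt_off :: "nat \<Rightarrow> nat list \<Rightarrow> nat list \<Rightarrow> (nat \<Rightarrow> nat \<Rightarrow> int) \<Rightarrow> (nat \<Rightarrow> nat \<Rightarrow> int) \<Rightarrow> real" where
  "rt_off n lam mu x y =
     (\<Sum>(i1,i2,j1,j2) \<in> {(a,b,c,d). a < b \<and> b < length lam \<and> c < length mu \<and> d < length mu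
                              \<and> c \<noteq> d \<and> y = swap_move x a b c d}.
        2 * real_of_int (x i1 j1) * real_of_int (x i2 j2) / (real n)^2)"

definition rt_kernel :: "nat \<Rightarrow> nat list \<Rightarrow> nat list \<Rightarrow> (nat \<Rightarrow> nat \<Rightarrow> int) \<Rightarrow> (nat \<Rightarrow> nat \<Rightarrow> int) \<Rightarrow> real" where
  "rt_kernel n lam mu x y =
     (if y = x then 1 - (\<Sum>z \<in> tables lam mu - {x}. rt_off n lam mu x z)
      else rt_off n lam mu x y)"

definition rt_expect :: "nat \<Rightarrow> nat list \<Rightarrow> nat list \<Rightarrow> (nat \<Rightarrow> nat \<Rightarrow> int) \<Rightarrow> ((nat \<Rightarrow> nat \<Rightarrow> int) \<Rightarrow> real) \<Rightarrow> real" where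
  "rt_expect n lam mu x f = (\<Sum>y \<in> tables lam mu. rt_kernel n lam mu x y * f y)"

end

theory Submission
  imports Defs
begin

lemma tables_bound:
  assumes "x \<in> tables lam mu" "i < length lam" "j < length mu"
  shows "x i j \<le> int (sum_list lam)"
proof -
  have "x i j \<le> (\<Sum>j'<length mu. x i j')"
    using assms by (intro member_le_sum) (auto simp: tables_def)
  also have "\<dots> = int (lam ! i)" using assms by (simp add: tables_def)
  also have "\<dots> \<le> int (sum_list lam)" using assms by (simp add: elem_le_sum_list)
  finally show ?thesis .
qed

lemma finite_tables: "finite (tables lam mu)"
proof -
  define A where "A = {..<length lam} \<times> {..<length mu}"
  define B where "B = {0..int (sum_list lam)}"
  define F where "F = {f. \<forall>p. (p \<in> A \<longrightarrow> f p \<in> B) \<and> (p \<notin> A \<longrightarrow> f p = (0::int))}"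
  have fF: "finite F" unfolding F_def A_def B_def by (intro finite_set_of_finite_funs) auto
  have "tables lam mu \<subseteq> curry ` F"
  proof
    fix x assume x: "x \<in> tables lam mu"
    have "case_prod x \<in> F"
      unfolding F_def A_def B_def using x tables_bound[OF x]
      by (auto simp: tables_def)
    then show "x \<in> curry ` F" by (metis curry_case_prod image_eqI)
  qed
  then show ?thesis using fF finite_subset by blast
qed

lemma sum_if_const: "(\<Sum>b\<in>A. if P then f b else 0) = (if P then sum f A else (0::'a::comm_monoid_add))"
  by simp
lemma if_conj0: "(if P \<and> Q then (y::'a::zero) else 0) = (if P then if Q then y else 0 else 0)" by simp

definition dl :: "nat \<Rightarrow> nat \<Rightarrow> nat \<Rightarrow> nat \<Rightarrow> nat \<Rightarrow> nat \<Rightarrow> real" where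
  "dl a b c d p q = (if a = p \<and> d = q then 1 else 0) + (if b = p \<and> c = q then 1 else 0)
     - (if a = p \<and> c = q then 1 else 0) - (if b = p \<and> d = q then 1 else 0)"

lemmas ifsimps = if_conj0 sum_if_const sum.delta sum.delta' finite_lessThan lessThan_iff if_True

lemma E1:
  fixes x :: "nat \<Rightarrow> nat \<Rightarrow> real"
  assumes "p < I" "q < J"
  shows "(\<Sum>a<I. \<Sum>b<I. \<Sum>c<J. \<Sum>d<J. x a c * x b d * dl a b c d p q)
   = 2 * ((\<Sum>c<J. x p c) * (\<Sum>a<I. x a q)) - 2 * x p q * (\<Sum>a<I. \<Sum>c<J. x a c)"
proof -
  have pw: "x a c * x b d * dl a b c d p q = 
     (if a = p \<and> d = q then x a c * x b d else 0) + (if b = p \<and> c = q then x a c * x b d else 0)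
     - (if a = p \<and> c = q then x a c * x b d else 0) - (if b = p \<and> d = q then x a c * x b d else 0)" for a b c d
    by (simp add: dl_def algebra_simps)
  show ?thesis using assms
    apply (simp only: pw sum.distrib sum_subtractf)
    apply (simp only: ifsimps cong: if_cong)
    apply (simp add: sum_distrib_left sum_distrib_right algebra_simps)
    done
qed

lemma if01: "(if A then (1::real) else 0) * (if B then 1 else 0) = (if A \<and> B then 1 else 0)" by simp
lemma if01b: "(y::real) * (if A then 1 else 0) = (if A then y else 0)" by simp

lemma E2pw:
  fixes x :: "nat \<Rightarrow> nat \<Rightarrow> real"
  shows "x a c * x b d * (dl a b c d p q * dl a b c d r s) = 
     (if a = p \<and> d = q \<and> a = r \<and> d = s then x a c * x b d else 0)
   + (if a = p \<and> d = q \<and> b = r \<and> c = s then x a c * x b d else 0)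
   - (if a = p \<and> d = q \<and> a = r \<and> c = s then x a c * x b d else 0)
   - (if a = p \<and> d = q \<and> b = r \<and> d = s then x a c * x b d else 0)
   + (if b = p \<and> c = q \<and> a = r \<and> d = s then x a c * x b d else 0)
   + (if b = p \<and> c = q \<and> b = r \<and> c = s then x a c * x b d else 0)
   - (if b = p \<and> c = q \<and> a = r \<and> c = s then x a c * x b d else 0)
   - (if b = p \<and> c = q \<and> b = r \<and> d = s then x a c * x b d else 0)
   - (if a = p \<and> c = q \<and> a = r \<and> d = s then x a c * x b d else 0)
   - (if a = p \<and> c = q \<and> b = r \<and> c = s then x a c * x b d else 0)
   + (if a = p \<and> c = q \<and> a = r \<and> c = s then x a c * x b d else 0)
   + (if a = p \<and> c = q \<and> b = r \<and> d = s then x a c * x b d else 0)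
   - (if b = p \<and> d = q \<and> a = r \<and> d = s then x a c * x b d else 0)
   - (if b = p \<and> d = q \<and> b = r \<and> c = s then x a c * x b d else 0)
   + (if b = p \<and> d = q \<and> a = r \<and> c = s then x a c * x b d else 0)
   + (if b = p \<and> d = q \<and> b = r \<and> d = s then x a c * x b d else 0)"
  unfolding dl_def
  apply (simp only: left_diff_distrib right_diff_distrib distrib_left distrib_right if01 conj_assoc)
  by (simp only: if01b mult.assoc[symmetric])
lemma E2:
  fixes x :: "nat \<Rightarrow> nat \<Rightarrow> real"
  assumes "p < I" "q < J" "r < I" "s < J"
  shows "(\<Sum>a<I. \<Sum>b<I. \<Sum>c<J. \<Sum>d<J. x a c * x b d * (dl a b c d p q * dl a b c d r s))
   = 2 * (if p = r \<and> q = s then x p q * (\<Sum>a<I. \<Sum>c<J. x a c) else 0)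
     + 2 * x p q * x r s + 2 * x p s * x r q
     - 2 * (if p = r then x p q * (\<Sum>a<I. x a s) + x r s * (\<Sum>a<I. x a q) else 0)
     - 2 * (if q = s then x p q * (\<Sum>c<J. x r c) + x r s * (\<Sum>c<J. x p c) else 0)
     + 2 * (if p = r \<and> q = s then (\<Sum>c<J. x p c) * (\<Sum>a<I. x a q) else 0)"
  using assms
  apply (simp only: E2pw sum.distrib sum_subtractf)
  apply (simp only: ifsimps cong: if_cong)
  apply (cases "p = r"; cases "q = s")
  apply (simp_all add: sum_distrib_left sum_distrib_right algebra_simps)
  done

lemma swap_in_tables:
  assumes x: "x \<in> tables lam mu" and m: "a < b" "b < length lam" "c < length mu" "d < length mu" "c \<noteq> d"
    and nz: "x a c \<noteq> 0" "x b d \<noteq> 0"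
  shows "swap_move x a b c d \<in> tables lam mu"
proof -
  have nn: "\<And>i j. 0 \<le> x i j" using x by (simp add: tables_def)
  have ac: "x a c \<ge> 1" using nn[of a c] nz by linarith
  have bd: "x b d \<ge> 1" using nn[of b d] nz by linarith
  have z: "\<And>i j. (length lam \<le> i \<or> length mu \<le> j) \<Longrightarrow> x i j = 0" using x unfolding tables_def by blast
  have r: "\<And>i. i < length lam \<Longrightarrow> (\<Sum>j<length mu. x i j) = int (lam ! i)" using x by (simp add: tables_def)
  have cl: "\<And>j. j < length mu \<Longrightarrow> (\<Sum>i<length lam. x i j) = int (mu ! j)" using x by (simp add: tables_def)
  show ?thesis unfolding tables_def
  proof (intro CollectI conjI allI impI)
    fix i j show "0 \<le> swap_move x a b c d i j"
      using nn[of i j] ac bd m by (auto simp: swap_move_def)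
  next
    fix i j assume "length lam \<le> i \<or> length mu \<le> j"
    then show "swap_move x a b c d i j = 0" using z[of i j] m by (auto simp: swap_move_def)
  next
    fix i assume i: "i < length lam"
    show "(\<Sum>j<length mu. swap_move x a b c d i j) = int (lam ! i)"
      unfolding swap_move_def using m r[OF i]
      by (simp only: sum.distrib sum_subtractf ifsimps cong: if_cong, (auto)?)
  next
    fix j assume j: "j < length mu"
    show "(\<Sum>i<length lam. swap_move x a b c d i j) = int (mu ! j)"
      unfolding swap_move_def using m cl[OF j]
      by (simp only: sum.distrib sum_subtractf ifsimps cong: if_cong, (auto)?)
  qed
qed

lemma swap_ne: "a \<noteq> b \<Longrightarrow> c \<noteq> d \<Longrightarrow> swap_move x a b c d \<noteq> x"
proof
  assume "a \<noteq> b" "c \<noteq> d" "swap_move x a b c d = x"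
  then have "swap_move x a b c d a c = x a c" by simp
  with \<open>a \<noteq> b\<close> \<open>c \<noteq> d\<close> show False by (simp add: swap_move_def)
qed


lemma expect_moves:
  fixes n :: nat and x :: "nat \<Rightarrow> nat \<Rightarrow> int" and f :: "(nat \<Rightarrow> nat \<Rightarrow> int) \<Rightarrow> real"
  assumes x: "x \<in> tables lam mu"
  defines "Mv \<equiv> {(a,b,c,d). a < b \<and> b < length lam \<and> c < length mu \<and> d < length mu \<and> c \<noteq> d}"
  defines "w \<equiv> (\<lambda>(i1,i2,j1,j2). 2 * real_of_int (x i1 j1) * real_of_int (x i2 j2) / (real n)^2)"
  defines "sw \<equiv> (\<lambda>(a,b,c,d). swap_move x a b c d)"
  shows "rt_expect n lam mu x f = f x + (\<Sum>m\<in>Mv. w m * (f (sw m) - f x))"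
proof -
  let ?T = "tables lam mu"
  have fT: "finite ?T" by (rule finite_tables)
  have fM: "finite Mv"
    by (rule finite_subset[of _ "{..<length lam} \<times> {..<length lam} \<times> {..<length mu} \<times> {..<length mu}"])
       (auto simp: Mv_def)
  have off: "rt_off n lam mu x y = sum w {m \<in> Mv. sw m = y}" for y
    unfolding rt_off_def w_def Mv_def sw_def by (rule sum.cong) auto
  define Mv' where "Mv' = {m \<in> Mv. sw m \<in> ?T - {x}}"
  have fM': "finite Mv'" using fM by (simp add: Mv'_def)
  have "(\<Sum>y\<in>?T-{x}. rt_off n lam mu x y * (f y - f x))
      = (\<Sum>y\<in>?T-{x}. \<Sum>m\<in>{m \<in> Mv'. sw m = y}. w m * (f (sw m) - f x))"
  proof (rule sum.cong)
    fix y assume y: "y \<in> ?T - {x}"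
    have "{m \<in> Mv'. sw m = y} = {m \<in> Mv. sw m = y}" using y by (auto simp: Mv'_def)
    then show "rt_off n lam mu x y * (f y - f x) = (\<Sum>m\<in>{m \<in> Mv'. sw m = y}. w m * (f (sw m) - f x))"
      by (simp add: off sum_distrib_right)
  qed simp
  also have "\<dots> = (\<Sum>m\<in>Mv'. w m * (f (sw m) - f x))"
    by (rule sum.group[OF fM' finite_Diff[OF fT]]) (auto simp: Mv'_def)
  also have "\<dots> = (\<Sum>m\<in>Mv. w m * (f (sw m) - f x))"
  proof (rule sum.mono_neutral_left[OF fM])
    show "Mv' \<subseteq> Mv" by (auto simp: Mv'_def)
    show "\<forall>m\<in>Mv - Mv'. w m * (f (sw m) - f x) = 0"
    proof
      fix m assume m: "m \<in> Mv - Mv'"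
      obtain a b c d where md: "m = (a,b,c,d)" by (cases m) auto
      have mm: "a < b" "b < length lam" "c < length mu" "d < length mu" "c \<noteq> d"
        using m md by (auto simp: Mv_def)
      have "w m = 0"
      proof (rule ccontr)
        assume "w m \<noteq> 0"
        then have "x a c \<noteq> 0" "x b d \<noteq> 0" by (auto simp: w_def md)
        then have "sw m \<in> ?T - {x}"
          using swap_in_tables[OF x mm] swap_ne[of a b c d x] mm by (auto simp: sw_def md)
        then show False using m by (auto simp: Mv'_def)
      qed
      then show "w m * (f (sw m) - f x) = 0" by simp
    qed
  qed
  finally have key: "(\<Sum>y\<in>?T-{x}. rt_off n lam mu x y * (f y - f x)) = (\<Sum>m\<in>Mv. w m * (f (sw m) - f x))" .
  have "rt_expect n lam mu x f = rt_kernel n lam mu x x * f x + (\<Sum>y\<in>?T-{x}. rt_kernel n lam mu x y * f y)"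
    unfolding rt_expect_def using x fT by (simp add: sum.remove)
  also have "\<dots> = f x + (\<Sum>y\<in>?T-{x}. rt_off n lam mu x y * (f y - f x))"
    by (simp add: rt_kernel_def algebra_simps sum_subtractf sum_distrib_right sum_distrib_left)
  finally show ?thesis using key by simp
qed


lemma sym_sum:
  fixes G :: "nat \<Rightarrow> nat \<Rightarrow> nat \<Rightarrow> nat \<Rightarrow> real"
  assumes sym: "\<And>a b c d. G b a d c = G a b c d"
    and z1: "\<And>a c d. G a a c d = 0" and z2: "\<And>a b c. G a b c c = 0"
  shows "(\<Sum>a<I. \<Sum>b<I. \<Sum>c<J. \<Sum>d<J. G a b c d)
     = 2 * (\<Sum>(a,b,c,d)\<in>{(a,b,c,d). a < b \<and> b < I \<and> c < J \<and> d < J \<and> c \<noteq> d}. G a b c d)"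
proof -
  define Box where "Box = {..<I} \<times> {..<I} \<times> {..<J} \<times> {..<J}"
  define A where "A = {(a,b,c,d). a < b \<and> b < I \<and> c < J \<and> d < J \<and> c \<noteq> d}"
  define B where "B = {(a,b,c,d). b < a \<and> a < I \<and> c < J \<and> d < J \<and> c \<noteq> d}"
  have fB: "finite Box" by (simp add: Box_def)
  have "(\<Sum>a<I. \<Sum>b<I. \<Sum>c<J. \<Sum>d<J. G a b c d) = (\<Sum>(a,b,c,d)\<in>Box. G a b c d)"
    by (simp add: Box_def sum.cartesian_product)
  also have "\<dots> = (\<Sum>(a,b,c,d)\<in>A \<union> B. G a b c d)"
  proof (rule sum.mono_neutral_right[OF fB])
    show "A \<union> B \<subseteq> Box" by (auto simp: Box_def A_def B_def)
    show "\<forall>i\<in>Box - (A \<union> B). (case i of (a, b, c, d) \<Rightarrow> G a b c d) = 0"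
    proof
      fix i assume i: "i \<in> Box - (A \<union> B)"
      obtain a b c d where id: "i = (a,b,c,d)" by (cases i) auto
      have "a = b \<or> c = d" using i id by (auto simp: Box_def A_def B_def)
      then show "(case i of (a, b, c, d) \<Rightarrow> G a b c d) = 0" using z1 z2 id by auto
    qed
  qed
  also have "\<dots> = (\<Sum>(a,b,c,d)\<in>A. G a b c d) + (\<Sum>(a,b,c,d)\<in>B. G a b c d)"
    by (rule sum.union_disjoint) (auto intro: finite_subset[OF _ fB] simp: Box_def A_def B_def)
  also have "(\<Sum>(a,b,c,d)\<in>B. G a b c d) = (\<Sum>(a,b,c,d)\<in>A. G a b c d)"
    by (rule sum.reindex_bij_witness[where i="\<lambda>(a,b,c,d). (b,a,d,c)" and j="\<lambda>(a,b,c,d). (b,a,d,c)"])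
       (auto simp: A_def B_def sym)
  finally show ?thesis by (simp add: A_def)
qed


lemma expect_box:
  fixes n :: nat and x :: "nat \<Rightarrow> nat \<Rightarrow> int" and f :: "(nat \<Rightarrow> nat \<Rightarrow> int) \<Rightarrow> real"
  assumes x: "x \<in> tables lam mu"
  shows "rt_expect n lam mu x f = f x + 1 / (real n)^2 *
    (\<Sum>a<length lam. \<Sum>b<length lam. \<Sum>c<length mu. \<Sum>d<length mu.
       real_of_int (x a c) * real_of_int (x b d) * (f (swap_move x a b c d) - f x))"
proof -
  define G where "G = (\<lambda>a b c d. real_of_int (x a c) * real_of_int (x b d) * (f (swap_move x a b c d) - f x))"
  have s1: "swap_move x b a d c = swap_move x a b c d" for a b c d
    by (auto simp: swap_move_def fun_eq_iff)
  have s2: "swap_move x a a c d = x" "swap_move x a b c c = x" for a b c d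
    by (auto simp: swap_move_def fun_eq_iff)
  have sy: "(\<Sum>a<length lam. \<Sum>b<length lam. \<Sum>c<length mu. \<Sum>d<length mu. G a b c d)
     = 2 * (\<Sum>(a,b,c,d)\<in>{(a,b,c,d). a < b \<and> b < length lam \<and> c < length mu \<and> d < length mu \<and> c \<noteq> d}. G a b c d)"
    by (rule sym_sum) (auto simp: G_def s1 s2)
  have "rt_expect n lam mu x f = f x +
     (\<Sum>(a,b,c,d)\<in>{(a,b,c,d). a < b \<and> b < length lam \<and> c < length mu \<and> d < length mu \<and> c \<noteq> d}.
        2 / (real n)^2 * G a b c d)"
    unfolding expect_moves[OF x] G_def
    by (intro arg_cong2[where f="(+)"] refl sum.cong) auto
  also have "\<dots> = f x + 2 / (real n)^2 *
     (\<Sum>(a,b,c,d)\<in>{(a,b,c,d). a < b \<and> b < length lam \<and> c < length mu \<and> d < length mu \<and> c \<noteq> d}. G a b c d)"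
    by (simp add: sum_distrib_left case_prod_unfold)
  finally show ?thesis using sy by (simp add: G_def)
qed

theorem lemma3p4:
  fixes n :: nat and lam mu :: "nat list" and x :: "nat \<Rightarrow> nat \<Rightarrow> int"
    and i j k l :: nat
  assumes "is_partition n lam" and "is_partition n mu"
    and "i < length lam" and "k < length lam" and "j < length mu" and "l < length mu"
    and "x \<in> tables lam mu"
  defines "X \<equiv> \<lambda>a b. real_of_int (x a b)"
    and "L \<equiv> \<lambda>a. real (lam ! a)" and "M \<equiv> \<lambda>b. real (mu ! b)" and "N \<equiv> real n"
  shows
    "(i \<noteq> k \<and> j \<noteq> l \<longrightarrow>
       rt_expect n lam mu x (\<lambda>T. real_of_int (T i j) * real_of_int (T k l)) =
         X i j * X k l * (1 - 4 / N + 2 / N^2)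
         + 2 / N^2 * (X k l * L i * M j + X i j * L k * M l + X i l * X k j))
   \<and> (i \<noteq> k \<and> j = l \<longrightarrow>
       rt_expect n lam mu x (\<lambda>T. real_of_int (T i j) * real_of_int (T k j)) =
         X i j * X k j * (1 - 4 / N + 4 / N^2)
         + 2 / N^2 * (X k j * (L i * M j - L i) + X i j * (L k * M j - L k)))
   \<and> (i = k \<and> j = l \<longrightarrow>
       rt_expect n lam mu x (\<lambda>T. (real_of_int (T i j))^2) =
         (X i j)^2 * (1 - 4 / N + 4 / N^2)
         + 2 / N^2 * (X i j * (2 * L i * M j - 2 * L i - 2 * M j + N) + L i * M j))"
  proof -
  let ?I = "length lam" and ?J = "length mu"
  note xt = assms(7)
  have Xr: "real_of_int (x a b) = X a b" for a b by (simp add: X_def)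
  have nsum: "sum_list lam = n" using assms(1) by (simp add: is_partition_def)
  have "lam ! 0 \<in> set lam" using assms(3) by (intro nth_mem) linarith
  then have "0 < lam ! 0" using assms(1) by (simp add: is_partition_def)
  moreover have "lam ! 0 \<le> sum_list lam" using assms(3) by (intro elem_le_sum_list) auto
  ultimately have Npos: "N > 0" using nsum by (simp add: N_def)
  have row: "(\<Sum>c<?J. X p c) = L p" if "p < ?I" for p
  proof -
    have "(\<Sum>c<?J. x p c) = int (lam ! p)" using xt that by (simp add: tables_def)
    then have "real_of_int (\<Sum>c<?J. x p c) = real (lam ! p)" by simp
    then show ?thesis by (simp add: X_def L_def)
  qed
  have col: "(\<Sum>a<?I. X a q) = M q" if "q < ?J" for q
  proof -
    have "(\<Sum>a<?I. x a q) = int (mu ! q)" using xt that by (simp add: tables_def)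
    then have "real_of_int (\<Sum>a<?I. x a q) = real (mu ! q)" by simp
    then show ?thesis by (simp add: X_def M_def)
  qed
  have tot: "(\<Sum>a<?I. \<Sum>c<?J. X a c) = N"
  proof -
    have "(\<Sum>a<?I. \<Sum>c<?J. X a c) = (\<Sum>a<?I. real (lam ! a))" by (simp add: row L_def)
    also have "\<dots> = real (sum_list lam)" by (simp add: sum_list_sum_nth lessThan_atLeast0)
    finally show ?thesis by (simp add: nsum N_def)
  qed
  have swX: "real_of_int (swap_move x a b c d p q) = X p q + dl a b c d p q" for a b c d p q
    by (simp add: swap_move_def dl_def X_def)
  have gen: "rt_expect n lam mu x (\<lambda>T. real_of_int (T p q) * real_of_int (T r s)) =
     X p q * X r s + 1 / N^2 * (X p q * (2 * (L r * M s) - 2 * X r s * N)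
       + X r s * (2 * (L p * M q) - 2 * X p q * N)
       + (2 * (if p = r \<and> q = s then X p q * N else 0)
     + 2 * X p q * X r s + 2 * X p s * X r q
     - 2 * (if p = r then X p q * M s + X r s * M q else 0)
     - 2 * (if q = s then X p q * L r + X r s * L p else 0)
     + 2 * (if p = r \<and> q = s then L p * M q else 0)))"
    if pq: "p < ?I" "q < ?J" "r < ?I" "s < ?J" for p q r s
  proof -
    have pw: "X a c * X b d * ((X p q + dl a b c d p q) * (X r s + dl a b c d r s) - X p q * X r s)
      = X p q * (X a c * X b d * dl a b c d r s) + X r s * (X a c * X b d * dl a b c d p q)
        + X a c * X b d * (dl a b c d p q * dl a b c d r s)" for a b c d
      by (simp add: algebra_simps)
    show ?thesis
      unfolding expect_box[OF xt]
      apply (simp only: swX Xr pw sum.distrib sum_distrib_left[symmetric])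
      apply (simp only: E1[OF pq(1,2)] E1[OF pq(3,4)] E2[OF pq] row col tot pq)
      apply (simp only: N_def)
      done
  qed
  show ?thesis
  proof (intro conjI impI)
    assume "i \<noteq> k \<and> j \<noteq> l"
    then show "rt_expect n lam mu x (\<lambda>T. real_of_int (T i j) * real_of_int (T k l)) =
         X i j * X k l * (1 - 4 / N + 2 / N^2)
         + 2 / N^2 * (X k l * L i * M j + X i j * L k * M l + X i l * X k j)"
      unfolding gen[OF assms(3,5,4,6)] using Npos by (simp add: field_simps power2_eq_square)
  next
    assume h: "i \<noteq> k \<and> j = l"
    then show "rt_expect n lam mu x (\<lambda>T. real_of_int (T i j) * real_of_int (T k j)) =
         X i j * X k j * (1 - 4 / N + 4 / N^2)
         + 2 / N^2 * (X k j * (L i * M j - L i) + X i j * (L k * M j - L k))"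
      unfolding gen[OF assms(3,5,4,5)] using Npos by (simp add: field_simps power2_eq_square)
  next
    assume h: "i = k \<and> j = l"
    have e: "(\<lambda>T. (real_of_int (T i j))^2) = (\<lambda>T. real_of_int (T i j) * real_of_int (T i j))"
      by (simp add: power2_eq_square)
    show "rt_expect n lam mu x (\<lambda>T. (real_of_int (T i j))^2) =
         (X i j)^2 * (1 - 4 / N + 4 / N^2)
         + 2 / N^2 * (X i j * (2 * L i * M j - 2 * L i - 2 * M j + N) + L i * M j)"
      unfolding e gen[OF assms(3,5,3,5)] using Npos by (simp add: field_simps power2_eq_square)
  qed
qed

end
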